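(* The constants $\lambda_1,\lambda_2>0$ can be chosen so that for all $n\geq1$, \[\mathbb P_\mu\big(\exists G\in CG(n,\geq\log n)\text{ with }|w|(G)>\lambda_1|E(G)|\text{ or }|w|(G)<\lambda_2|E(G)|\big)<n^{-4}.\]
   Context: $\mu$ is the product measure on $\mathbb R^{E(\mathbb Z^2)}$ under which the interactions $(w_e)$ are i.i.d. standard normal. $[n]=\{0,\dots,n-1\}$, $[n]^2$ is the subgraph of the lattice $\mathbb Z^2$ induced on $\{(i,j):i,j\in[n]\}$, and $CG(n,\geq m)$ is the set of connected subgraphs of $[n]^2$ with at least $m$ vertices. For a subgraph $G$, $|w|(G)=\sum_{e\in E(G)}|w_e|$. $\log$ is the natural logarithm. *)

theory Defs
  imports "HOL-Probability.Probability"
begin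

type_synonym vertex = "int \<times> int"
type_synonym edge = "vertex set"
type_synonym graph = "vertex set \<times> edge set"

definition lattice_edges :: "edge set" where
  "lattice_edges = {{u, v} | u v. \<bar>fst u - fst v\<bar> + \<bar>snd u - snd v\<bar> = 1}"

definition std_normal :: "real measure" where
  "std_normal = density lborel std_normal_density"

definition mu :: "(edge \<Rightarrow> real) measure" where
  "mu = (\<Pi>\<^sub>M e\<in>lattice_edges. std_normal)"

definition box :: "nat \<Rightarrow> vertex set" where
  "box n = {(i, j). 0 \<le> i \<and> i < int n \<and> 0 \<le> j \<and> j < int n}"

definition box_edges :: "nat \<Rightarrow> edge set" where
  "box_edges n = {e \<in> lattice_edges. e \<subseteq> box n}"

definition subgraph_of_box :: "nat \<Rightarrow> graph \<Rightarrow> bool" where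
  "subgraph_of_box n G \<longleftrightarrow> fst G \<subseteq> box n \<and> snd G \<subseteq> box_edges n \<and> (\<forall>e\<in>snd G. e \<subseteq> fst G)"

definition graph_connected :: "graph \<Rightarrow> bool" where
  "graph_connected G \<longleftrightarrow> fst G \<noteq> {} \<and>
     (\<forall>u\<in>fst G. \<forall>v\<in>fst G. (u, v) \<in> {(x, y). {x, y} \<in> snd G}\<^sup>*)"

definition CG :: "nat \<Rightarrow> real \<Rightarrow> graph set" where
  "CG n m = {G. subgraph_of_box n G \<and> graph_connected G \<and> real (card (fst G)) \<ge> m}"

definition absw :: "(edge \<Rightarrow> real) \<Rightarrow> graph \<Rightarrow> real" where
  "absw w G = (\<Sum>e\<in>snd G. \<bar>w e\<bar>)"

end

theory Submission
  imports Defs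
begin

lemma ps_std: "prob_space std_normal"
  unfolding std_normal_def by (rule prob_space_normal_density) simp

interpretation SN: product_prob_space "\<lambda>_::edge. std_normal" lattice_edges
  by (simp add: product_prob_space_def product_sigma_finite_def product_prob_space_axioms_def ps_std prob_space_imp_sigma_finite)

lemma ps_mu: "prob_space mu"
  unfolding mu_def by (rule SN.P.prob_space_axioms)

lemma sets_std[simp]: "sets std_normal = sets borel"
  by (simp add: std_normal_def)

lemma meas_std: "f \<in> borel_measurable borel \<Longrightarrow> f \<in> borel_measurable std_normal"
  by (subst measurable_cong_sets[OF sets_std refl])

lemma prod_int:
  assumes F: "finite F" "F \<subseteq> lattice_edges" and f: "f \<in> borel_measurable borel"
  shows "(\<integral>\<^sup>+ w. (\<Prod>e\<in>F. f (w e)) \<partial>mu) = (\<integral>\<^sup>+ x. f x \<partial>std_normal) ^ card F"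
proof -
  have fm: "f \<in> borel_measurable std_normal" by (subst measurable_cong_sets[OF sets_std refl]) (rule f)
  have pm: "(\<lambda>w. \<Prod>e\<in>F. f (w e)) \<in> borel_measurable (PiM F (\<lambda>_. std_normal))"
    by (intro borel_measurable_prod_ennreal measurable_compose[OF measurable_component_singleton[where M="\<lambda>_. std_normal"] fm]) auto
  have "(\<integral>\<^sup>+ w. (\<Prod>e\<in>F. f (w e)) \<partial>mu) = (\<integral>\<^sup>+ w. (\<Prod>e\<in>F. f (restrict w F e)) \<partial>mu)"
    by (intro nn_integral_cong prod.cong) auto
  also have "\<dots> = (\<integral>\<^sup>+ w. (\<Prod>e\<in>F. f (w e)) \<partial>distr mu (PiM F (\<lambda>_. std_normal)) (\<lambda>x. restrict x F))"
    unfolding mu_def by (subst nn_integral_distr[OF measurable_restrict_subset[OF F(2), where M="\<lambda>_. std_normal"]]) (simp_all add: measurable_distr_eq1 pm)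
  also have "\<dots> = (\<integral>\<^sup>+ w. (\<Prod>e\<in>F. f (w e)) \<partial>PiM F (\<lambda>_. std_normal))"
    unfolding mu_def using F by (simp add: SN.distr_PiM_restrict_finite)
  also have "\<dots> = (\<Prod>e\<in>F. \<integral>\<^sup>+ x. f x \<partial>std_normal)"
    by (rule SN.product_nn_integral_prod) (auto simp: F fm)
  finally show ?thesis by (simp only: prod_constant)
qed

lemma nd_int1:
  assumes "0 < \<sigma>"
  shows "(\<integral>\<^sup>+ x. ennreal (normal_density 0 \<sigma> x) \<partial>lborel) = 1"
  using prob_space.emeasure_space_1[OF prob_space_normal_density[OF assms, of 0]]
  by (simp add: emeasure_density)

lemma gauss_mgf_sq:
  assumes a: "a < 1/2"
  shows "(\<integral>\<^sup>+ x. ennreal (exp (a * x\<^sup>2)) \<partial>std_normal) = ennreal (1 / sqrt (1 - 2*a))"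
proof -
  define \<sigma> where "\<sigma> = 1 / sqrt (1 - 2*a)"
  have sp: "0 < 1 - 2*a" using a by simp
  have \<sigma>: "0 < \<sigma>" using sp by (simp add: \<sigma>_def)
  have eq: "std_normal_density x * exp (a * x\<^sup>2) = \<sigma> * normal_density 0 \<sigma> x" for x
  proof -
    have "\<sigma>\<^sup>2 = 1 / (1 - 2*a)" using sp by (simp add: \<sigma>_def power_divide)
    have a: "sqrt (2 * pi * \<sigma>\<^sup>2) = sqrt (2*pi) * \<sigma>"
      using \<sigma> by (simp add: real_sqrt_mult)
    have c: "1 / \<sigma>\<^sup>2 = 1 - 2*a" using \<open>\<sigma>\<^sup>2 = 1 / (1 - 2*a)\<close> by simp
    have "-(x - 0)\<^sup>2 / (2 * \<sigma>\<^sup>2) = - x\<^sup>2 * (1/\<sigma>\<^sup>2) / 2" using \<sigma> by (simp add: field_simps)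
    also have "\<dots> = - x\<^sup>2 * (1 - 2*a) / 2" by (simp only: c)
    also have "\<dots> = - x\<^sup>2 / 2 + a * x\<^sup>2" by (simp add: field_simps)
    finally have b: "- x\<^sup>2 / 2 + a * x\<^sup>2 = -(x - 0)\<^sup>2 / (2 * \<sigma>\<^sup>2)" by simp
    have l: "std_normal_density x * exp (a * x\<^sup>2) = 1 / sqrt (2*pi) * exp (-(x - 0)\<^sup>2 / (2 * \<sigma>\<^sup>2))"
      by (simp only: std_normal_density_def mult.assoc exp_add[symmetric] b)
    have r: "\<sigma> * normal_density 0 \<sigma> x = 1 / sqrt (2*pi) * exp (-(x - 0)\<^sup>2 / (2 * \<sigma>\<^sup>2))"
      unfolding normal_density_def a using \<sigma> by simp
    show ?thesis using l r by simp
  qed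
  have "(\<integral>\<^sup>+ x. ennreal (exp (a * x\<^sup>2)) \<partial>std_normal)
      = (\<integral>\<^sup>+ x. ennreal (std_normal_density x) * ennreal (exp (a * x\<^sup>2)) \<partial>lborel)"
    unfolding std_normal_def by (subst nn_integral_density) auto
  also have "\<dots> = (\<integral>\<^sup>+ x. ennreal \<sigma> * ennreal (normal_density 0 \<sigma> x) \<partial>lborel)"
    by (intro nn_integral_cong) (simp add: eq ennreal_mult[symmetric] normal_density_nonneg \<sigma> less_imp_le)
  also have "\<dots> = ennreal \<sigma>"
    by (subst nn_integral_cmult) (auto simp: nd_int1[OF \<sigma>])
  finally show ?thesis by (simp add: \<sigma>_def)
qed

lemma comp_meas: "e \<in> lattice_edges \<Longrightarrow> (\<lambda>w. w e) \<in> borel_measurable mu"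
  unfolding mu_def by (subst measurable_cong_sets[OF refl sets_std[symmetric]]) (rule measurable_component_singleton)

lemma markov_prod:
  assumes F: "finite F" "F \<subseteq> lattice_edges" and f: "f \<in> borel_measurable borel"
    and fnn: "\<And>x. 0 \<le> f x" and c: "0 < c" and M0: "0 \<le> M"
    and M: "(\<integral>\<^sup>+ x. ennreal (f x) \<partial>std_normal) \<le> ennreal M"
    and A: "A \<in> sets mu" "\<And>w. w \<in> A \<Longrightarrow> c \<le> (\<Prod>e\<in>F. f (w e))"
  shows "c * measure mu A \<le> M ^ card F"
proof -
  interpret P: prob_space mu by (rule ps_mu)
  have fe: "(\<lambda>x. ennreal (f x)) \<in> borel_measurable borel" using f by simp
  have "ennreal c * emeasure mu A = (\<integral>\<^sup>+ w. ennreal c * indicator A w \<partial>mu)"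
    using A by (simp add: nn_integral_cmult_indicator)
  also have "\<dots> \<le> (\<integral>\<^sup>+ w. (\<Prod>e\<in>F. ennreal (f (w e))) \<partial>mu)"
  proof (intro nn_integral_mono)
    fix w show "ennreal c * indicator A w \<le> (\<Prod>e\<in>F. ennreal (f (w e)))"
      using A(2)[of w] by (auto simp: indicator_def prod_ennreal fnn prod_nonneg)
  qed
  also have "\<dots> = (\<integral>\<^sup>+ x. ennreal (f x) \<partial>std_normal) ^ card F"
    by (rule prod_int[OF F fe])
  also have "\<dots> \<le> ennreal M ^ card F" using M by (intro power_mono) auto
  finally have "ennreal (c * measure mu A) \<le> ennreal (M ^ card F)"
    using c M0 by (simp add: P.emeasure_eq_measure ennreal_mult ennreal_power[symmetric])
  then show ?thesis using M0 by simp
qed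

lemma sumabs_meas: "finite F \<Longrightarrow> F \<subseteq> lattice_edges \<Longrightarrow> (\<lambda>w. \<Sum>e\<in>F. \<bar>w e\<bar>) \<in> borel_measurable mu"
  by (intro borel_measurable_sum borel_measurable_abs comp_meas) auto

lemma upper_tail:
  fixes eps :: real
  assumes eps: "0 < eps" "eps < 1"
  defines "M1 \<equiv> exp 1 * (1 / sqrt (1 - 2*(1/4)))"
  defines "lam1 \<equiv> ln (M1 / eps)"
  shows "0 < lam1" and
   "\<And>F. finite F \<Longrightarrow> F \<subseteq> lattice_edges \<Longrightarrow>
      measure mu {w\<in>space mu. lam1 * card F < (\<Sum>e\<in>F. \<bar>w e\<bar>)} \<le> eps ^ card F"
proof -
  have M1g: "1 < M1" unfolding M1_def
  proof -
    have "1 < exp (1::real)" by simp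
    moreover have "1 \<le> 1 / sqrt (1 - 2*(1/4::real))" by simp
    moreover have "exp 1 * 1 \<le> exp 1 * (1 / sqrt (1 - 2*(1/4::real)))"
      using calculation(2) by (intro mult_left_mono) auto
    ultimately show "1 < exp 1 * (1 / sqrt (1 - 2*(1/4::real)))" by linarith
  qed
  have q: "1 < M1 / eps" using M1g eps by (simp add: less_divide_eq)
  then show "0 < lam1" unfolding lam1_def by simp
  have elam: "exp lam1 = M1 / eps" unfolding lam1_def using q by simp
  fix F :: "edge set" assume F: "finite F" "F \<subseteq> lattice_edges"
  let ?A = "{w\<in>space mu. lam1 * card F < (\<Sum>e\<in>F. \<bar>w e\<bar>)}"
  have Am: "?A \<in> sets mu" by (intro borel_measurable_less sumabs_meas F measurable_const) auto
  have int: "(\<integral>\<^sup>+ x. ennreal (exp \<bar>x\<bar>) \<partial>std_normal) \<le> ennreal M1"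
  proof -
    have "(\<integral>\<^sup>+ x. ennreal (exp \<bar>x\<bar>) \<partial>std_normal) \<le> (\<integral>\<^sup>+ x. ennreal (exp 1) * ennreal (exp ((1/4) * x\<^sup>2)) \<partial>std_normal)"
    proof (intro nn_integral_mono)
      fix x :: real
      have "\<bar>x\<bar> \<le> 1 + (1/4) * x\<^sup>2"
      proof -
        have "0 \<le> (\<bar>x\<bar>/2 - 1)\<^sup>2" by simp
        moreover have "\<bar>x\<bar>\<^sup>2 = x\<^sup>2" by simp
        ultimately show ?thesis unfolding power2_eq_square by (simp add: algebra_simps)
      qed
      then have "exp \<bar>x\<bar> \<le> exp 1 * exp ((1/4) * x\<^sup>2)" by (simp add: exp_add[symmetric])
      then show "ennreal (exp \<bar>x\<bar>) \<le> ennreal (exp 1) * ennreal (exp ((1/4) * x\<^sup>2))"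
        by (simp add: ennreal_mult[symmetric])
    qed
    also have "\<dots> = ennreal (exp 1) * ennreal (1 / sqrt (1 - 2*(1/4)))"
      using gauss_mgf_sq[of "1/4"] by (subst nn_integral_cmult) (auto intro!: meas_std)
    also have "\<dots> = ennreal M1" unfolding M1_def by (simp add: ennreal_mult[symmetric])
    finally show ?thesis .
  qed
  have "exp lam1 ^ card F * measure mu ?A \<le> M1 ^ card F"
  proof (rule markov_prod[OF F _ _ _ _ int Am])
    show "(\<lambda>x::real. exp \<bar>x\<bar>) \<in> borel_measurable borel" by (intro borel_measurable_continuous_onI) (auto intro!: continuous_intros continuous_on_rabs)
    show "0 < exp lam1 ^ card F" by simp
    show "0 \<le> M1" using M1g by simp
    fix w assume "w \<in> ?A"
    then have "lam1 * card F < (\<Sum>e\<in>F. \<bar>w e\<bar>)" by simp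
    then have "exp (card F * lam1) \<le> exp (\<Sum>e\<in>F. \<bar>w e\<bar>)" by (simp add: mult.commute)
    then show "exp lam1 ^ card F \<le> (\<Prod>e\<in>F. exp \<bar>w e\<bar>)" by (simp add: exp_of_nat_mult exp_sum F)
  qed auto
  then have "(M1 / eps) ^ card F * measure mu ?A \<le> M1 ^ card F" by (simp add: elam)
  then show "measure mu ?A \<le> eps ^ card F"
    using eps M1g by (simp add: power_divide field_simps)
qed

lemma lower_tail:
  fixes eps :: real
  assumes eps: "0 < eps" "eps < 1"
  defines "t \<equiv> (2 * exp 1 / eps)\<^sup>2"
  defines "lam2 \<equiv> 1 / t"
  shows "0 < lam2" and
   "\<And>F. finite F \<Longrightarrow> F \<subseteq> lattice_edges \<Longrightarrow>
      measure mu {w\<in>space mu. (\<Sum>e\<in>F. \<bar>w e\<bar>) < lam2 * card F} \<le> eps ^ card F"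
proof -
  have t0: "0 < t" unfolding t_def using eps by simp
  then show "0 < lam2" unfolding lam2_def by simp
  define M2 where "M2 = 1 / sqrt (1 - 2*(-t)) + exp (-t)"
  have M20: "0 \<le> M2" unfolding M2_def using t0 by simp
  have sq: "sqrt (1 + 2*t) \<le> exp t"
  proof -
    have "sqrt (1 + 2*t) \<le> sqrt ((1+t)\<^sup>2)" by (intro real_sqrt_le_mono) (simp add: power2_eq_square algebra_simps)
    also have "\<dots> = 1 + t" using t0 by simp
    also have "\<dots> \<le> exp t" by (rule exp_ge_add_one_self)
    finally show ?thesis .
  qed
  have sq2: "2 * exp 1 / eps \<le> sqrt (1 + 2*t)"
  proof -
    have "2 * exp 1 / eps = sqrt t" unfolding t_def using eps by simp
    also have "\<dots> \<le> sqrt (1 + 2*t)" using t0 by simp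
    finally show ?thesis .
  qed
  have sqp: "0 < sqrt (1 + 2*t)" using t0 by simp
  have "exp (-t) \<le> 1 / sqrt (1 + 2*t)"
    using sq sqp by (simp add: exp_minus field_simps)
  then have "M2 \<le> 2 / sqrt (1 + 2*t)" unfolding M2_def by simp
  also have "\<dots> \<le> eps / exp 1"
    using sq2 sqp eps by (simp add: field_simps)
  finally have M2e: "exp 1 * M2 \<le> eps" by (simp add: field_simps)
  fix F :: "edge set" assume F: "finite F" "F \<subseteq> lattice_edges"
  let ?A = "{w\<in>space mu. (\<Sum>e\<in>F. \<bar>w e\<bar>) < lam2 * card F}"
  have Am: "?A \<in> sets mu" by (intro borel_measurable_less sumabs_meas F measurable_const) auto
  have int: "(\<integral>\<^sup>+ x. ennreal (exp (- t * \<bar>x\<bar>)) \<partial>std_normal) \<le> ennreal M2"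
  proof -
    have "(\<integral>\<^sup>+ x. ennreal (exp (- t * \<bar>x\<bar>)) \<partial>std_normal) \<le> (\<integral>\<^sup>+ x. ennreal (exp ((-t) * x\<^sup>2)) + ennreal (exp (-t)) \<partial>std_normal)"
    proof (intro nn_integral_mono)
      fix x :: real
      have "exp (- t * \<bar>x\<bar>) \<le> exp ((-t) * x\<^sup>2) + exp (-t)"
      proof (cases "\<bar>x\<bar> \<le> 1")
        case True
        then have "x\<^sup>2 \<le> \<bar>x\<bar>" by (metis abs_ge_zero mult_left_le power2_abs power2_eq_square)
        then have "exp (- t * \<bar>x\<bar>) \<le> exp ((-t) * x\<^sup>2)" using t0 by simp
        then show ?thesis by (smt (verit) exp_gt_zero)
      next
        case False
        then have "exp (- t * \<bar>x\<bar>) \<le> exp (-t)" using t0 by simp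
        then show ?thesis by (smt (verit) exp_gt_zero)
      qed
      then show "ennreal (exp (- t * \<bar>x\<bar>)) \<le> ennreal (exp ((-t) * x\<^sup>2)) + ennreal (exp (-t))"
        by (simp add: ennreal_plus[symmetric] del: ennreal_plus)
    qed
    also have "\<dots> = ennreal (1 / sqrt (1 - 2*(-t))) + ennreal (exp (-t))"
    proof (subst nn_integral_add)
      show "(\<lambda>x. ennreal (exp ((-t) * x\<^sup>2))) \<in> borel_measurable std_normal"
        by (intro meas_std) measurable
      show "(\<lambda>x. ennreal (exp (-t))) \<in> borel_measurable std_normal" by simp
      show "(\<integral>\<^sup>+ x. ennreal (exp ((-t) * x\<^sup>2)) \<partial>std_normal) + (\<integral>\<^sup>+ x. ennreal (exp (-t)) \<partial>std_normal)
          = ennreal (1 / sqrt (1 - 2*(-t))) + ennreal (exp (-t))"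
        using gauss_mgf_sq[of "-t"] t0 prob_space.emeasure_space_1[OF ps_std] by simp
    qed
    also have "\<dots> = ennreal M2" unfolding M2_def using t0 by (simp add: ennreal_plus[symmetric] del: ennreal_plus)
    finally show ?thesis .
  qed
  have "exp (-1) ^ card F * measure mu ?A \<le> M2 ^ card F"
  proof (rule markov_prod[OF F _ _ _ M20 int Am])
    show "(\<lambda>x::real. exp (- t * \<bar>x\<bar>)) \<in> borel_measurable borel"
      by (intro borel_measurable_continuous_onI) (auto intro!: continuous_intros continuous_on_rabs)
    fix w assume "w \<in> ?A"
    then have "(\<Sum>e\<in>F. \<bar>w e\<bar>) < lam2 * card F" by simp
    then have "t * (\<Sum>e\<in>F. \<bar>w e\<bar>) \<le> t * (lam2 * card F)" using t0 by simp
    also have "\<dots> = card F" unfolding lam2_def using t0 by simp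
    finally have "exp (card F * (-1)) \<le> exp (- t * (\<Sum>e\<in>F. \<bar>w e\<bar>))" by simp
    then show "exp (-1) ^ card F \<le> (\<Prod>e\<in>F. exp (- t * \<bar>w e\<bar>))"
      by (simp add: exp_of_nat_mult[symmetric] exp_sum[symmetric] F sum_distrib_left)
  qed auto
  then have "measure mu ?A \<le> (exp 1 * M2) ^ card F"
    by (simp add: exp_minus power_divide field_simps power_mult_distrib)
  also have "\<dots> \<le> eps ^ card F" using M2e M20 by (intro power_mono) auto
  finally show "measure mu ?A \<le> eps ^ card F" .
qed


lemma box_eq: "box n = {0..<int n} \<times> {0..<int n}"
  unfolding box_def by auto

lemma finite_box[simp]: "finite (box n)" by (simp add: box_eq)

lemma card_box: "card (box n) = n * n" by (simp add: box_eq card_cartesian_product)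

lemma finite_box_edges[simp]: "finite (box_edges n)"
proof -
  have "box_edges n \<subseteq> Pow (box n)" unfolding box_edges_def by auto
  then show ?thesis by (rule finite_subset) simp
qed

lemma box_edges_lattice: "box_edges n \<subseteq> lattice_edges" unfolding box_edges_def by auto

lemma lattice_edge_card: "e \<in> lattice_edges \<Longrightarrow> card e = 2"
proof -
  assume "e \<in> lattice_edges"
  then obtain u v where e: "e = {u, v}" and d: "\<bar>fst u - fst v\<bar> + \<bar>snd u - snd v\<bar> = 1"
    unfolding lattice_edges_def by auto
  have "u \<noteq> v" using d by auto
  then show ?thesis using e by simp
qed

lemma lattice_edge_ne: "e \<in> lattice_edges \<Longrightarrow> e \<noteq> {}"
  using lattice_edge_card by fastforce

lemma lattice_edge_finite: "e \<in> lattice_edges \<Longrightarrow> finite e"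
  using lattice_edge_card by (metis card.infinite zero_neq_numeral)

lemma edges_at: "{e \<in> lattice_edges. u \<in> e} \<subseteq>
   {{u, (fst u + 1, snd u)}, {u, (fst u - 1, snd u)}, {u, (fst u, snd u + 1)}, {u, (fst u, snd u - 1)}}"
proof
  fix e assume "e \<in> {e \<in> lattice_edges. u \<in> e}"
  then obtain p q where e: "e = {p, q}" and d: "\<bar>fst p - fst q\<bar> + \<bar>snd p - snd q\<bar> = 1" and u: "u \<in> e"
    unfolding lattice_edges_def by auto
  have nb: "\<And>x y :: int \<times> int. \<bar>fst x - fst y\<bar> + \<bar>snd x - snd y\<bar> = 1 \<Longrightarrow>
     y = (fst x + 1, snd x) \<or> y = (fst x - 1, snd x) \<or> y = (fst x, snd x + 1) \<or> y = (fst x, snd x - 1)"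
    by (auto simp: prod_eq_iff abs_if split: if_splits)
  from u e have "(u = p \<and> e = {u, q}) \<or> (u = q \<and> e = {u, p})" by auto
  then show "e \<in> {{u, (fst u + 1, snd u)}, {u, (fst u - 1, snd u)}, {u, (fst u, snd u + 1)}, {u, (fst u, snd u - 1)}}"
  proof
    assume a: "u = p \<and> e = {u, q}"
    then show ?thesis using nb[of p q] d by auto
  next
    assume a: "u = q \<and> e = {u, p}"
    have "\<bar>fst q - fst p\<bar> + \<bar>snd q - snd p\<bar> = 1" using d by (simp add: abs_minus_commute)
    then show ?thesis using nb[of q p] a by auto
  qed
qed

lemma card_edges_at: "card {e \<in> lattice_edges. u \<in> e} \<le> 4"
proof -
  have "card {e \<in> lattice_edges. u \<in> e} \<le> card {{u, (fst u + 1, snd u)}, {u, (fst u - 1, snd u)}, {u, (fst u, snd u + 1)}, {u, (fst u, snd u - 1)}}"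
    by (rule card_mono[OF _ edges_at]) simp
  also have "\<dots> \<le> 4" by (simp add: card_insert_if)
  finally show ?thesis .
qed

definition nb :: "nat \<Rightarrow> graph \<Rightarrow> edge set" where
  "nb n G = {e \<in> box_edges n. e \<inter> fst G \<noteq> {}}"

lemma finite_nb: "finite (nb n G)"
  unfolding nb_def by simp

lemma card_nb: "finite (fst G) \<Longrightarrow> card (nb n G) \<le> 4 * card (fst G)"
proof -
  assume fin: "finite (fst G)"
  have "nb n G \<subseteq> (\<Union>u\<in>fst G. {e \<in> lattice_edges. u \<in> e})"
    unfolding nb_def using box_edges_lattice by auto
  then have "card (nb n G) \<le> card (\<Union>u\<in>fst G. {e \<in> lattice_edges. u \<in> e})"
    by (rule card_mono[rotated]) (auto intro: finite_subset[OF edges_at] simp: fin)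
  also have "\<dots> \<le> (\<Sum>u\<in>fst G. card {e \<in> lattice_edges. u \<in> e})"
    by (rule card_UN_le[OF fin])
  also have "\<dots> \<le> (\<Sum>u\<in>fst G. 4)" by (intro sum_mono card_edges_at)
  finally show ?thesis by simp
qed

lemma snd_sub_nb: "subgraph_of_box n G \<Longrightarrow> snd G \<subseteq> nb n G"
  unfolding nb_def subgraph_of_box_def using box_edges_lattice lattice_edge_ne by fastforce

lemma fst_sub_union:
  assumes "graph_connected G" "subgraph_of_box n G" "snd G \<noteq> {}"
  shows "fst G \<subseteq> \<Union>(snd G)"
proof
  fix u assume u: "u \<in> fst G"
  from assms(3) obtain e where e: "e \<in> snd G" by auto
  then have "e \<in> lattice_edges" "e \<subseteq> fst G" using assms(2) box_edges_lattice
    unfolding subgraph_of_box_def by auto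
  then obtain p where p: "p \<in> e" "p \<in> fst G" using lattice_edge_ne by blast
  have "(u, p) \<in> {(x, y). {x, y} \<in> snd G}\<^sup>*" using assms(1) u p(2) unfolding graph_connected_def by blast
  then show "u \<in> \<Union>(snd G)"
  proof (cases rule: converse_rtranclE)
    case base then show ?thesis using p e by auto
  next
    case (step y) then show ?thesis by auto
  qed
qed

lemma card_fst_le:
  assumes "graph_connected G" "subgraph_of_box n G" "snd G \<noteq> {}"
  shows "card (fst G) \<le> 2 * card (snd G)"
proof -
  have sl: "snd G \<subseteq> lattice_edges" and fs: "finite (snd G)"
    using assms(2) box_edges_lattice unfolding subgraph_of_box_def
    by (auto intro: finite_subset[OF _ finite_box_edges])
  have "card (fst G) \<le> card (\<Union>(snd G))"
    by (rule card_mono[OF _ fst_sub_union[OF assms]]) (use fs sl lattice_edge_finite in auto)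
  also have "\<dots> \<le> (\<Sum>e\<in>snd G. card e)"
    by (rule card_Union_le_sum_card)
  also have "\<dots> = (\<Sum>e\<in>snd G. 2)" using sl lattice_edge_card by (intro sum.cong) auto
  finally show ?thesis by simp
qed

definition CGv :: "nat \<Rightarrow> vertex \<Rightarrow> graph set" where
  "CGv n v = {G. subgraph_of_box n G \<and> graph_connected G \<and> v \<in> fst G}"

lemma finite_subgraphs: "finite {G. subgraph_of_box n G}"
proof -
  have "{G. subgraph_of_box n G} \<subseteq> Pow (box n) \<times> Pow (box_edges n)"
    unfolding subgraph_of_box_def by auto
  then show ?thesis by (rule finite_subset) simp
qed

lemma finite_CGv: "finite (CGv n v)"
  by (rule finite_subset[OF _ finite_subgraphs]) (auto simp: CGv_def)

definition Fam :: "nat \<Rightarrow> graph \<Rightarrow> edge set set" where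
  "Fam n G = {X. X \<subseteq> box_edges n \<and> snd G \<subseteq> X \<and> X \<inter> (nb n G - snd G) = {}}"

lemma Fam_eq:
  assumes "subgraph_of_box n G"
  shows "Fam n G = (\<lambda>Y. snd G \<union> Y) ` Pow (box_edges n - nb n G)"
proof -
  have s: "snd G \<subseteq> nb n G" by (rule snd_sub_nb[OF assms])
  have "nb n G \<subseteq> box_edges n" unfolding nb_def by auto
  show ?thesis
  proof (intro equalityI subsetI)
    fix X assume X: "X \<in> Fam n G"
    then have "X = snd G \<union> (X - nb n G)" using s unfolding Fam_def by auto
    moreover have "X - nb n G \<in> Pow (box_edges n - nb n G)" using X unfolding Fam_def by auto
    ultimately show "X \<in> (\<lambda>Y. snd G \<union> Y) ` Pow (box_edges n - nb n G)" by blast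
  next
    fix X assume "X \<in> (\<lambda>Y. snd G \<union> Y) ` Pow (box_edges n - nb n G)"
    then show "X \<in> Fam n G" using s \<open>nb n G \<subseteq> box_edges n\<close> unfolding Fam_def by auto
  qed
qed

lemma card_Fam:
  assumes "subgraph_of_box n G"
  shows "card (Fam n G) = 2 ^ (card (box_edges n) - card (nb n G))"
proof -
  have s: "snd G \<subseteq> nb n G" by (rule snd_sub_nb[OF assms])
  have nbs: "nb n G \<subseteq> box_edges n" unfolding nb_def by auto
  have "inj_on (\<lambda>Y. snd G \<union> Y) (Pow (box_edges n - nb n G))"
    using s by (auto simp: inj_on_def)
  then have "card (Fam n G) = card (Pow (box_edges n - nb n G))"
    by (simp add: Fam_eq[OF assms] card_image)
  also have "\<dots> = 2 ^ card (box_edges n - nb n G)"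
    by (simp add: card_Pow)
  also have "card (box_edges n - nb n G) = card (box_edges n) - card (nb n G)"
    by (rule card_Diff_subset[OF finite_subset[OF nbs] nbs]) simp
  finally show ?thesis .
qed

lemma Fam_disj_aux:
  assumes G: "G \<in> CGv n v" and G': "G' \<in> CGv n v" and X: "X \<in> Fam n G" "X \<in> Fam n G'"
  shows "fst G \<subseteq> fst G'"
proof
  fix u assume u: "u \<in> fst G"
  have vG: "v \<in> fst G" and c: "graph_connected G" and sG: "subgraph_of_box n G"
    using G unfolding CGv_def by auto
  have vG': "v \<in> fst G'" and sG': "subgraph_of_box n G'"
    using G' unfolding CGv_def by auto
  have "(v, u) \<in> {(x, y). {x, y} \<in> snd G}\<^sup>*" using c vG u unfolding graph_connected_def by blast
  then show "u \<in> fst G'"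
  proof (induction rule: rtrancl_induct)
    case base then show ?case by (rule vG')
  next
    case (step x y)
    then have xy: "{x, y} \<in> snd G" by simp
    then have "{x, y} \<in> X" using X(1) unfolding Fam_def by auto
    moreover have "{x, y} \<in> box_edges n" using xy sG unfolding subgraph_of_box_def by auto
    then have "{x, y} \<in> nb n G'" using step.IH unfolding nb_def by auto
    ultimately have "{x, y} \<in> snd G'" using X(2) unfolding Fam_def by auto
    then show ?case using sG' unfolding subgraph_of_box_def by auto
  qed
qed

lemma Fam_disj:
  assumes G: "G \<in> CGv n v" and G': "G' \<in> CGv n v" and X: "X \<in> Fam n G" "X \<in> Fam n G'"
  shows "G = G'"
proof -
  have f: "fst G = fst G'" using Fam_disj_aux[OF G G' X] Fam_disj_aux[OF G' G X(2,1)] by auto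
  have e: "snd H \<subseteq> snd H'" if H: "H \<in> CGv n v" "H' \<in> CGv n v" "X \<in> Fam n H" "X \<in> Fam n H'"
     "fst H = fst H'" for H H'
  proof
    fix e assume e: "e \<in> snd H"
    have sH: "subgraph_of_box n H" using H unfolding CGv_def by auto
    have "e \<in> X" using e H(3) unfolding Fam_def by auto
    moreover have "e \<in> nb n H'" using snd_sub_nb[OF sH] e H(5) unfolding nb_def by auto
    ultimately show "e \<in> snd H'" using H(4) unfolding Fam_def by auto
  qed
  have "snd G = snd G'" using e[OF G G' X f] e[OF G' G X(2,1) f[symmetric]] by auto
  with f show ?thesis by (simp add: prod_eq_iff)
qed

lemma peierls: "(\<Sum>G\<in>CGv n v. (1/2::real) ^ card (nb n G)) \<le> 1"
proof -
  let ?B = "card (box_edges n)"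
  have sub: "\<And>G. G \<in> CGv n v \<Longrightarrow> subgraph_of_box n G" unfolding CGv_def by auto
  have nbB: "\<And>G. card (nb n G) \<le> ?B" unfolding nb_def by (intro card_mono) auto
  have "(\<Sum>G\<in>CGv n v. card (Fam n G)) = card (\<Union>G\<in>CGv n v. Fam n G)"
  proof (rule card_UN_disjoint[symmetric])
    show "finite (CGv n v)" by (rule finite_CGv)
    show "\<forall>G\<in>CGv n v. finite (Fam n G)"
      by (auto simp: Fam_def intro: finite_subset[of _ "Pow (box_edges n)"])
    show "\<forall>G\<in>CGv n v. \<forall>G'\<in>CGv n v. G \<noteq> G' \<longrightarrow> Fam n G \<inter> Fam n G' = {}"
      using Fam_disj by blast
  qed
  also have "\<dots> \<le> card (Pow (box_edges n))"
    by (rule card_mono) (auto simp: Fam_def)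
  also have "\<dots> = 2 ^ ?B" by (simp add: card_Pow)
  finally have "(\<Sum>G\<in>CGv n v. card (Fam n G)) \<le> 2 ^ ?B" .
  then have "(\<Sum>G\<in>CGv n v. (2::nat) ^ (?B - card (nb n G))) \<le> 2 ^ ?B"
    using card_Fam[OF sub] by simp
  then have "real (\<Sum>G\<in>CGv n v. (2::nat) ^ (?B - card (nb n G))) \<le> real (2 ^ ?B)"
    by (simp only: of_nat_le_iff)
  then have "(\<Sum>G\<in>CGv n v. (2::real) ^ (?B - card (nb n G))) \<le> 2 ^ ?B"
    by simp
  moreover have "(\<Sum>G\<in>CGv n v. (2::real) ^ (?B - card (nb n G))) = 2 ^ ?B * (\<Sum>G\<in>CGv n v. (1/2::real) ^ card (nb n G))"
    unfolding sum_distrib_left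
    by (intro sum.cong refl) (simp add: power_diff nbB power_one_over)
  ultimately show ?thesis by simp
qed


lemma tails:
  fixes eps :: real
  assumes "0 < eps" "eps < 1"
  shows "\<exists>(lam1::real) (lam2::real). 0 < lam1 \<and> 0 < lam2 \<and> (\<forall>F. finite F \<longrightarrow> F \<subseteq> lattice_edges \<longrightarrow>
     measure mu {w\<in>space mu. lam1 * card F < (\<Sum>e\<in>F. \<bar>w e\<bar>)} \<le> eps ^ card F \<and>
     measure mu {w\<in>space mu. (\<Sum>e\<in>F. \<bar>w e\<bar>) < lam2 * card F} \<le> eps ^ card F)"
proof -
  note U = upper_tail[OF assms] and L = lower_tail[OF assms]
  show ?thesis
    by (rule exI, rule exI, intro conjI allI impI, rule U(1), rule L(1), rule U(2), assumption+, rule L(2), assumption+)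
qed

lemma sum_over_roots:
  fixes h :: "graph \<Rightarrow> real"
  assumes Bad: "finite Bad"
    and BadC: "\<And>G. G \<in> Bad \<Longrightarrow> subgraph_of_box n G \<and> graph_connected G"
    and h: "\<And>G. 0 \<le> h G"
  shows "(\<Sum>G\<in>Bad. h G) \<le> (\<Sum>v\<in>box n. \<Sum>G\<in>CGv n v. h G)"
proof -
  have fin: "finite (fst G) \<and> fst G \<noteq> {} \<and> fst G \<subseteq> box n" if "G \<in> Bad" for G
  proof -
    have "fst G \<subseteq> box n" "fst G \<noteq> {}" using BadC[OF that] unfolding subgraph_of_box_def graph_connected_def by auto
    then show ?thesis using finite_subset[OF _ finite_box] by blast
  qed
  have "(\<Sum>G\<in>Bad. h G) \<le> (\<Sum>G\<in>Bad. \<Sum>v\<in>fst G. h G)"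
  proof (intro sum_mono)
    fix G assume "G \<in> Bad"
    then have "1 \<le> card (fst G)" using fin by (simp add: Suc_le_eq card_gt_0_iff)
    then have "1 * h G \<le> real (card (fst G)) * h G" using h by (intro mult_right_mono) auto
    then show "h G \<le> (\<Sum>v\<in>fst G. h G)" by simp
  qed
  also have "\<dots> = (\<Sum>G\<in>Bad. \<Sum>v\<in>{v. v \<in> box n \<and> v \<in> fst G}. h G)"
  proof (intro sum.cong refl)
    fix G assume "G \<in> Bad"
    then show "fst G = {v. v \<in> box n \<and> v \<in> fst G}" using fin by blast
  qed
  also have "\<dots> = (\<Sum>v\<in>box n. \<Sum>G\<in>{G. G \<in> Bad \<and> v \<in> fst G}. h G)"
    by (rule sum.swap_restrict) (simp_all add: Bad)
  also have "\<dots> \<le> (\<Sum>v\<in>box n. \<Sum>G\<in>CGv n v. h G)"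
    by (intro sum_mono sum_mono2 finite_CGv) (auto simp: CGv_def BadC h)
  finally show ?thesis .
qed

lemma key_ineq:
  fixes m k nbk :: nat and n :: nat
  assumes m: "1 \<le> m" and km: "k \<le> 2 * m" and nbk: "nbk \<le> 4 * k" and lnk: "ln (real n) \<le> real k"
    and n: "1 \<le> n"
  shows "2 * (exp (-14) / 2^10) ^ m \<le> (1/2::real) ^ nbk * (real n powr (-7) / 2)"
proof -
  have e1: "(1/2::real) ^ (8*m) \<le> (1/2) ^ nbk" using nbk km by (intro power_decreasing) auto
  have "exp (-14::real) ^ m = exp (real m * (-14))" by (subst exp_of_nat_mult[symmetric]) simp
  also have "\<dots> \<le> exp (-7 * ln (real n))" using lnk km by simp
  also have "\<dots> = real n powr (-7)" using n by (simp add: powr_def)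
  finally have e2: "exp (-14::real) ^ m \<le> real n powr (-7)" .
  have "((1/2::real)^2) ^ m \<le> ((1/2)^2) ^ 1" using m by (intro power_decreasing) (auto simp: power2_eq_square)
  then have e3: "2 * ((1/2::real)^2) ^ m \<le> 1/2" by (simp add: power2_eq_square)
  have p1: "(2::real)^(m*8) = 256^m" by (simp add: power_mult mult.commute[of m])
  have p2: "(1024::real)^m = 4^m * 2^(m*8)" unfolding p1 by (simp flip: power_mult_distrib)
  have eq: "2 * (exp (-14) / 2^10) ^ m = (1/2::real) ^ (8*m) * exp (-14) ^ m * (2 * ((1/2)^2) ^ m)"
    by (simp add: power_mult_distrib power_divide power_mult[symmetric] field_simps p2 flip: power_add)
  also have "\<dots> \<le> (1/2) ^ nbk * real n powr (-7) * (1/2)"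
    by (intro mult_mono e1 e2 e3) auto
  finally show ?thesis by simp
qed

lemma up_sets: "finite F \<Longrightarrow> F \<subseteq> lattice_edges \<Longrightarrow> {w\<in>space mu. (c::real) < (\<Sum>e\<in>F. \<bar>w e\<bar>)} \<in> sets mu"
  by (intro borel_measurable_less sumabs_meas measurable_const) auto

lemma lo_sets: "finite F \<Longrightarrow> F \<subseteq> lattice_edges \<Longrightarrow> {w\<in>space mu. (\<Sum>e\<in>F. \<bar>w e\<bar>) < (c::real)} \<in> sets mu"
  by (intro borel_measurable_less sumabs_meas measurable_const) auto

theorem corollary2p4:
  shows "\<exists>lam1 lam2 :: real. lam1 > 0 \<and> lam2 > 0 \<and>
    (\<forall>n::nat. n \<ge> 1 \<longrightarrow>
      (let S = {w \<in> space mu. \<exists>G\<in>CG n (ln (real n)).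
                  absw w G > lam1 * real (card (snd G)) \<or> absw w G < lam2 * real (card (snd G))}
       in S \<in> sets mu \<and> measure mu S < real n powr (-4)))"
proof -
  define eps :: real where "eps = exp (-14) / 2^10"
  have "exp (-14::real) < 1" by simp
  then have "exp (-14::real) < 1024" by linarith
  then have eps: "0 < eps" "eps < 1" unfolding eps_def by simp_all
  obtain lam1 lam2 :: real where l: "0 < lam1" "0 < lam2" and
    T: "\<And>F. finite F \<Longrightarrow> F \<subseteq> lattice_edges \<Longrightarrow>
     measure mu {w\<in>space mu. lam1 * card F < (\<Sum>e\<in>F. \<bar>w e\<bar>)} \<le> eps ^ card F \<and>
     measure mu {w\<in>space mu. (\<Sum>e\<in>F. \<bar>w e\<bar>) < lam2 * card F} \<le> eps ^ card F"
    using tails[OF eps] by blast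
  show ?thesis
  proof (intro exI conjI allI impI)
    show "0 < lam1" "0 < lam2" by (fact l)+
    fix n :: nat assume n: "1 \<le> n"
    define Bad where "Bad = {G \<in> CG n (ln (real n)). snd G \<noteq> {}}"
    define Up where "Up F = {w\<in>space mu. lam1 * card F < (\<Sum>e\<in>F. \<bar>w e\<bar>)}" for F :: "edge set"
    define Lo where "Lo F = {w\<in>space mu. (\<Sum>e\<in>F. \<bar>w e\<bar>) < lam2 * card F}" for F :: "edge set"
    define S where "S = {w \<in> space mu. \<exists>G\<in>CG n (ln (real n)).
                  absw w G > lam1 * real (card (snd G)) \<or> absw w G < lam2 * real (card (snd G))}"
    have BadI: "subgraph_of_box n G \<and> graph_connected G \<and> ln (real n) \<le> card (fst G) \<and> snd G \<noteq> {}"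
      if "G \<in> Bad" for G using that unfolding Bad_def CG_def by auto
    have Fin: "finite (snd G) \<and> snd G \<subseteq> lattice_edges" if "G \<in> Bad" for G
      using BadI[OF that] box_edges_lattice unfolding subgraph_of_box_def
      by (auto intro: finite_subset[OF _ finite_box_edges])
    have finBad: "finite Bad"
      by (rule finite_subset[OF _ finite_subgraphs]) (auto simp: Bad_def CG_def)
    have S_eq: "S = (\<Union>G\<in>Bad. Up (snd G) \<union> Lo (snd G))"
    proof (intro equalityI subsetI)
      fix w assume "w \<in> S"
      then obtain G where w: "w \<in> space mu" and G: "G \<in> CG n (ln (real n))"
        and c: "absw w G > lam1 * real (card (snd G)) \<or> absw w G < lam2 * real (card (snd G))"
        unfolding S_def by blast
      have "snd G \<noteq> {}"
      proof
        assume "snd G = {}" then show False using c by (simp add: absw_def)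
      qed
      then have "G \<in> Bad" using G by (simp add: Bad_def)
      then show "w \<in> (\<Union>G\<in>Bad. Up (snd G) \<union> Lo (snd G))"
        using w c unfolding Up_def Lo_def absw_def by blast
    next
      fix w assume "w \<in> (\<Union>G\<in>Bad. Up (snd G) \<union> Lo (snd G))"
      then obtain G where "G \<in> Bad" "w \<in> Up (snd G) \<union> Lo (snd G)" by blast
      then show "w \<in> S" unfolding S_def Up_def Lo_def absw_def Bad_def by blast
    qed
    have sets: "Up (snd G) \<union> Lo (snd G) \<in> sets mu" if "G \<in> Bad" for G
      using Fin[OF that] unfolding Up_def Lo_def by (intro sets.Un up_sets lo_sets) auto
    have Ss: "S \<in> sets mu" unfolding S_eq using finBad sets by (intro sets.finite_UN) auto
    have "measure mu S \<le> (\<Sum>G\<in>Bad. measure mu (Up (snd G) \<union> Lo (snd G)))"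
      unfolding S_eq by (rule measure_UNION_le[OF finBad sets])
    also have "\<dots> \<le> (\<Sum>G\<in>Bad. (1/2::real) ^ card (nb n G) * (real n powr (-7) / 2))"
    proof (intro sum_mono)
      fix G assume G: "G \<in> Bad"
      have "measure mu (Up (snd G) \<union> Lo (snd G)) \<le> measure mu (Up (snd G)) + measure mu (Lo (snd G))"
        using Fin[OF G] unfolding Up_def Lo_def by (intro measure_Un_le up_sets lo_sets) auto
      also have "\<dots> \<le> 2 * eps ^ card (snd G)"
        using T[of "snd G"] Fin[OF G] unfolding Up_def Lo_def by simp
      also have "\<dots> \<le> (1/2::real) ^ card (nb n G) * (real n powr (-7) / 2)"
        unfolding eps_def
      proof (rule key_ineq[OF _ _ _ _ n])
        show "1 \<le> card (snd G)" using Fin[OF G] BadI[OF G] by (simp add: Suc_le_eq card_gt_0_iff)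
        show "card (fst G) \<le> 2 * card (snd G)" using BadI[OF G] by (intro card_fst_le) auto
        have "finite (fst G)" using BadI[OF G] unfolding subgraph_of_box_def
          by (auto intro: finite_subset[OF _ finite_box])
        then show "card (nb n G) \<le> 4 * card (fst G)" by (rule card_nb)
        show "ln (real n) \<le> real (card (fst G))" using BadI[OF G] by simp
      qed
      finally show "measure mu (Up (snd G) \<union> Lo (snd G)) \<le> (1/2::real) ^ card (nb n G) * (real n powr (-7) / 2)" .
    qed
    also have "\<dots> = (\<Sum>G\<in>Bad. (1/2::real) ^ card (nb n G)) * (real n powr (-7) / 2)"
      by (simp add: sum_distrib_right)
    also have "\<dots> \<le> (\<Sum>v\<in>box n. \<Sum>G\<in>CGv n v. (1/2::real) ^ card (nb n G)) * (real n powr (-7) / 2)"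
      by (intro mult_right_mono sum_over_roots finBad) (auto simp: BadI)
    also have "\<dots> \<le> (\<Sum>v\<in>box n. 1) * (real n powr (-7) / 2)"
      by (intro mult_right_mono sum_mono peierls) auto
    also have "\<dots> = real n powr 2 * real n powr (-7) / 2"
      using n by (simp add: card_box powr_numeral power2_eq_square)
    also have "\<dots> = real n powr (-5) / 2"
      by (subst powr_add[symmetric]) simp
    also have "\<dots> < real n powr (-4)"
    proof -
      have "real n powr (-5) \<le> real n powr (-4)" using n by (intro powr_mono) auto
      moreover have "0 < real n powr (-5)" using n by simp
      ultimately show ?thesis by linarith
    qed
    finally have "measure mu S < real n powr (-4)" .
    with Ss show "let S = {w \<in> space mu. \<exists>G\<in>CG n (ln (real n)).
                  absw w G > lam1 * real (card (snd G)) \<or> absw w G < lam2 * real (card (snd G))}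
       in S \<in> sets mu \<and> measure mu S < real n powr (-4)"
      unfolding S_def Let_def by blast
  qed
qed

end
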